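(* Let $k\geq2$, $n$, $r$ be positive integers with $r<\frac{(k-1)n}{k}$, and let $\mathcal{F}\subseteq\binom{[n]}{r}$ be $k$-wise intersecting. Let $\sigma$ be a permutation of $[n]$ (viewed as a cyclic order) such that $|\mathcal{F}_\sigma|=r$ and every member of $\mathcal{F}_\sigma$ contains $\sigma(v)$, for some position $v\in[n]$. Let $i\in[n]\setminus\{v,v-1\}$ (where $v-1=n$ if $v=1$), and let $\mu$ be obtained from $\sigma$ by swapping the entries in positions $i$ and $i+1$ (where $i+1=1$ if $i=n$). If $|\mathcal{F}_\mu|=r$, then every member of $\mathcal{F}_\mu$ contains $\sigma(v)$.
   Context: $\binom{[n]}{r}$ is the family of $r$-subsets of $[n]$. A family is $k$-wise intersecting if any $k$ of its members have nonempty common intersection. For a permutation $\sigma$ of $[n]$, a $\sigma$-interval of length $r$ is a set $\{\sigma(x),\sigma(x+1),\dots,\sigma(x+r-1)\}$ for some $x\in[n]$, indices modulo $n$; $\mathcal{F}_\sigma$ denotes the set of members of $\mathcal{F}$ that are $\sigma$-intervals. (The paper calls $\sigma$ saturated if $|\mathcal{F}_\sigma|=r$, and $v$-saturated if moreover all members of $\mathcal{F}_\sigma$ contain the common point at position $v$.) *)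

theory Defs
  imports "HOL-Combinatorics.Combinatorics"
begin

definition cyc :: "nat \<Rightarrow> nat \<Rightarrow> nat" where
  "cyc n m = ((m + n - 1) mod n) + 1"

definition sigma_interval :: "nat \<Rightarrow> (nat \<Rightarrow> nat) \<Rightarrow> nat \<Rightarrow> nat \<Rightarrow> nat set" where
  "sigma_interval n \<sigma> r x = (\<lambda>j. \<sigma> (cyc n (x + j))) ` {0..<r}"

definition F_sigma :: "nat \<Rightarrow> nat \<Rightarrow> (nat \<Rightarrow> nat) \<Rightarrow> nat set set \<Rightarrow> nat set set" where
  "F_sigma n r \<sigma> F = {A \<in> F. \<exists>x\<in>{1..n}. A = sigma_interval n \<sigma> r x}"

text \<open>k-wise intersecting: any k members (not necessarily distinct) have a common element.\<close>
definition kwise_intersecting :: "nat \<Rightarrow> 'a set set \<Rightarrow> bool" where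
  "kwise_intersecting k F \<longleftrightarrow> (\<forall>A. (\<forall>j<k. A j \<in> F) \<longrightarrow> (\<Inter>j<k. A j) \<noteq> {})"

end

theory Submission imports Defs begin

lemma cyc_range: "n > 0 \<Longrightarrow> cyc n m \<in> {1..n}"
  unfolding cyc_def by (simp add: Suc_leI)

lemma cyc_mod_nat: "n > 0 \<Longrightarrow> cyc n m mod n = m mod n"
proof -
  assume n: "n > 0"
  have "cyc n m mod n = ((m + n - 1) mod n + 1) mod n" unfolding cyc_def ..
  also have "\<dots> = (m + n - 1 + 1) mod n" by (simp add: mod_Suc_eq)
  also have "m + n - 1 + 1 = m + n" using n by simp
  finally show ?thesis by simp
qed

lemma cyc_mod: "n > 0 \<Longrightarrow> int (cyc n m) mod int n = int m mod int n"
  by (metis cyc_mod_nat zmod_int)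

lemma cyc_id: "p \<in> {1..n} \<Longrightarrow> cyc n p = p"
proof -
  assume p: "p \<in> {1..n}"
  have "(p + n - 1) mod n = p - 1"
  proof (cases "p = n")
    case True
    then have "p + n - 1 = (p - 1) + 1 * n" using p by auto
    then show ?thesis using p True by (metis mod_mult_self1 mod_less diff_less zero_less_one atLeastAtMost_iff le_trans less_one not_le)
  next
    case False
    then have e: "p + n - 1 = (p - 1) + n" using p by auto
    have "p - 1 < n" using p by auto
    then show ?thesis unfolding e by simp
  qed
  then show ?thesis unfolding cyc_def using p by simp
qed

lemma cyc_cong: "m mod n = m' mod n \<Longrightarrow> cyc n m = cyc n m'"
  proof (cases "n = 0")
  case True
  assume "m mod n = m' mod n" then show ?thesis using True by simp
next
  case False
  assume h: "m mod n = m' mod n"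
  have "(m + n - 1) mod n = (m + (n - 1)) mod n" "(m' + n - 1) mod n = (m' + (n - 1)) mod n"
    using False by auto
  moreover have "(m + (n - 1)) mod n = (m' + (n - 1)) mod n"
    by (metis h mod_add_left_eq)
  ultimately show ?thesis unfolding cyc_def by simp
qed

lemma eq_by_mod: "p \<in> {1..n} \<Longrightarrow> q \<in> {1..n} \<Longrightarrow> int p mod int n = int q mod int n \<Longrightarrow> p = q"
  by (metis cyc_cong cyc_id of_nat_eq_iff of_nat_mod)

definition pos :: "nat \<Rightarrow> nat \<Rightarrow> nat \<Rightarrow> nat set" where
  "pos n r x = (\<lambda>j. cyc n (x + j)) ` {0..<r}"

lemma si_pos: "sigma_interval n \<sigma> r x = \<sigma> ` pos n r x"
  unfolding sigma_interval_def pos_def by (simp add: image_image)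

lemma pos_sub: "n > 0 \<Longrightarrow> pos n r x \<subseteq> {1..n}"
  unfolding pos_def using cyc_range by blast

lemma mem_pos:
  assumes n: "n > 0" and rn: "r \<le> n" and p: "p \<in> {1..n}"
  shows "p \<in> pos n r x \<longleftrightarrow> (int p - int x) mod int n < int r"
proof
  assume "p \<in> pos n r x"
  then obtain j where j: "j < r" "p = cyc n (x + j)" unfolding pos_def by auto
  have "int p mod int n = int (x + j) mod int n" using j cyc_mod n by blast
  then have "(int p - int x) mod int n = (int (x + j) - int x) mod int n"
    by (metis mod_diff_left_eq)
  also have "\<dots> = int j" using j rn by simp
  finally show "(int p - int x) mod int n < int r" using j by simp
next
  assume h: "(int p - int x) mod int n < int r"
  define j where "j = nat ((int p - int x) mod int n)"
  have j: "j < r" "int j = (int p - int x) mod int n" using h n unfolding j_def by (auto simp: nat_less_iff)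
  have "int (cyc n (x + j)) mod int n = int (x + j) mod int n" using cyc_mod n by blast
  also have "\<dots> = (int x + (int p - int x) mod int n) mod int n" using j by simp
  also have "\<dots> = int p mod int n" by (simp add: mod_add_right_eq)
  finally have "cyc n (x + j) = p" using eq_by_mod[OF cyc_range[OF n] p] by blast
  then show "p \<in> pos n r x" unfolding pos_def using j by force
qed

theorem lemma2p3:
  fixes k n r v i :: nat and F :: "nat set set" and \<sigma> :: "nat \<Rightarrow> nat"
  assumes "k \<ge> 2" and "n > 0" and "r > 0"
    and "real r < real ((k - 1) * n) / real k"
    and "F \<subseteq> {A. A \<subseteq> {1..n} \<and> card A = r}"
    and "kwise_intersecting k F"
    and "\<sigma> permutes {1..n}"
    and "v \<in> {1..n}"
    and "card (F_sigma n r \<sigma> F) = r"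
    and "\<forall>A\<in>F_sigma n r \<sigma> F. \<sigma> v \<in> A"
    and "i \<in> {1..n} - {v, cyc n (v + n - 1)}"
    and "card (F_sigma n r (\<sigma> \<circ> transpose i (cyc n (i + 1))) F) = r"
  shows "\<forall>A\<in>F_sigma n r (\<sigma> \<circ> transpose i (cyc n (i + 1))) F. \<sigma> v \<in> A"
proof (rule ccontr)
  note k2 = assms(1) and n0 = assms(2) and r0 = assms(3) and hreal = assms(4)
    and hF = assms(5) and hk = assms(6) and hperm = assms(7) and hv = assms(8)
    and hcard = assms(9) and hall = assms(10) and hi = assms(11)
  define i1 where "i1 = cyc n (i + 1)"
  define \<tau> where "\<tau> = transpose i i1"
  assume "\<not> (\<forall>A\<in>F_sigma n r (\<sigma> \<circ> transpose i (cyc n (i + 1))) F. \<sigma> v \<in> A)"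
  then obtain B where hB: "B \<in> F_sigma n r (\<sigma> \<circ> \<tau>) F" "\<sigma> v \<notin> B"
    unfolding \<tau>_def i1_def by blast
  have rk: "r * k < (k - 1) * n"
  proof -
    have "real r * real k < real ((k - 1) * n)" using hreal k2 by (simp add: pos_less_divide_eq)
    then have "real (r * k) < real ((k - 1) * n)" by simp
    then show ?thesis by linarith
  qed
  have rn: "r < n"
  proof -
    have "(k - 1) * n \<le> k * n" by simp
    then have "r * k < n * k" using rk by (metis mult.commute order_less_le_trans)
    then show ?thesis using mult_less_cancel2 by blast
  qed
  define m where "m = n - r"
  have m0: "m > 0" using rn m_def by simp
  have rkm: "r < (k - 1) * m"
  proof -
    have "(k - 1) * n = (k - 1) * m + (k - 1) * r" using rn unfolding m_def
      by (simp add: add_mult_distrib2[symmetric])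
    moreover have "r * k = r + (k - 1) * r" using k2
      by (metis Suc_diff_1 add.commute mult.commute mult_Suc_right not_numeral_le_zero not_gr_zero)
    ultimately show ?thesis using rk by linarith
  qed
  have inj: "inj \<sigma>" using hperm permutes_inj by blast
  have ivn: "i \<in> {1..n}" "i \<noteq> v" "i \<noteq> cyc n (v + n - 1)" using hi by auto
  have i1n: "i1 \<in> {1..n}" unfolding i1_def using cyc_range n0 by blast
  define d where "d q = (int q - int v) mod int n" for q
  have d_rng: "0 \<le> d q \<and> d q < int n" for q unfolding d_def using n0 by simp

  define x where "x t = cyc n (v + n + t + 1 - r)" for t
  have xn: "x t \<in> {1..n}" for t unfolding x_def using cyc_range n0 by blast
  have xmod: "(int p - int (x t)) mod int n = (d p + int r - 1 - int t) mod int n" for p t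
  proof -
    have "int (x t) mod int n = int (v + n + t + 1 - r) mod int n" unfolding x_def using cyc_mod n0 by blast
    also have "int (v + n + t + 1 - r) = int v + int n + int t + 1 - int r" using rn by simp
    finally have "int (x t) mod int n = (int v + int t + 1 - int r) mod int n"
      by (metis add.commute add_diff_eq mod_add_self2 add.left_commute)
    then have "(int p - int (x t)) mod int n = (int p - (int v + int t + 1 - int r)) mod int n"
      by (metis mod_diff_right_eq)
    also have "\<dots> = ((int p - int v) + (int r - 1 - int t)) mod int n" by (simp add: algebra_simps)
    also have "\<dots> = (d p + (int r - 1 - int t)) mod int n" unfolding d_def
      by (rule mod_add_left_eq[symmetric])
    also have "\<dots> = (d p + int r - 1 - int t) mod int n" by (simp add: algebra_simps)
    finally show ?thesis .
  qed
  have notmem: "p \<notin> pos n r (x t)" if "p \<in> {1..n}" "t < r" "d p - int m \<le> int t" "int t \<le> d p - 1" for p t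
  proof -
    have "(d p + int r - 1 - int t) mod int n = d p + int r - 1 - int t"
      using that d_rng[of p] unfolding m_def using rn by (intro mod_pos_pos_trivial) auto
    then have "(int p - int (x t)) mod int n \<ge> int r" using xmod that by simp
    then show ?thesis using mem_pos[OF n0 less_imp_le[OF rn] that(1)] by simp
  qed
  define f where "f t = \<sigma> ` pos n r (x t)" for t
  have fF: "f t \<in> F" if "t < r" for t
  proof -
    have sub: "F_sigma n r \<sigma> F \<subseteq> f ` {0..<r}"
    proof
      fix A assume A: "A \<in> F_sigma n r \<sigma> F"
      then obtain x0 where x0: "x0 \<in> {1..n}" "A = \<sigma> ` pos n r x0"
        unfolding F_sigma_def si_pos by blast
      have "\<sigma> v \<in> A" using hall A by blast
      then have "v \<in> pos n r x0" using x0 inj by (auto dest: injD)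
      then have jr: "(int v - int x0) mod int n < int r"
        using mem_pos[OF n0 less_imp_le[OF rn] hv] by blast
      define t where "t = r - 1 - nat ((int v - int x0) mod int n)"
      have tr: "t < r" unfolding t_def using r0 by simp
      have "int t = int r - 1 - (int v - int x0) mod int n"
      proof -
        have J: "int (nat ((int v - int x0) mod int n)) = (int v - int x0) mod int n" using n0 by simp
        then have "nat ((int v - int x0) mod int n) < r" using jr by linarith
        then show ?thesis unfolding t_def using J by linarith
      qed
      have "(int x0 - int (x t)) mod int n = (d x0 + int r - 1 - int t) mod int n" by (rule xmod)
      also have "\<dots> = (d x0 + (int v - int x0) mod int n) mod int n"
        using \<open>int t = _\<close> by simp
      also have "\<dots> = ((int x0 - int v) + (int v - int x0)) mod int n"
        unfolding d_def by (metis mod_add_eq)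
      also have "\<dots> = 0" by simp
      finally have "int x0 mod int n = int (x t) mod int n"
        by (metis mod_eq_dvd_iff dvd_0_right mod_0 mod_eq_0_iff_dvd)
      then have "x0 = x t" using eq_by_mod[OF x0(1) xn] by blast
      then show "A \<in> f ` {0..<r}" using x0 tr unfolding f_def by auto
    qed
    have fin: "finite (f ` {0..<r})" by simp
    have "card (f ` {0..<r}) \<le> r" using card_image_le[of "{0..<r}" f] by simp
    then have "F_sigma n r \<sigma> F = f ` {0..<r}"
      using card_seteq[OF fin sub] hcard by simp
    then have "f t \<in> F_sigma n r \<sigma> F" using that by simp
    then show ?thesis unfolding F_sigma_def by simp
  qed

  obtain b where b: "b \<in> {1..n}" "B = \<sigma> ` \<tau> ` pos n r b" "B \<in> F"
    using hB(1) unfolding F_sigma_def si_pos by (auto simp: image_comp)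
  have cmod: "int (cyc n (v + n - 1)) mod int n = (int v - 1) mod int n"
  proof -
    have "int (cyc n (v + n - 1)) mod int n = int (v + n - 1) mod int n" using cyc_mod n0 by blast
    also have "int (v + n - 1) = (int v - 1) + int n" using hv by auto
    finally show ?thesis by simp
  qed
  have vi1: "v \<noteq> i1"
  proof
    assume "v = i1"
    then have "int v mod int n = (int i + 1) mod int n" unfolding i1_def using cyc_mod n0
      by (metis of_nat_Suc Suc_eq_plus1 add.commute)
    then have "(int v - 1) mod int n = int i mod int n"
      by (metis add_diff_cancel_right' mod_diff_left_eq)
    then have "int (cyc n (v + n - 1)) mod int n = int i mod int n" using cmod by simp
    then have "cyc n (v + n - 1) = i" using eq_by_mod[OF cyc_range[OF n0] ivn(1)] by blast
    then show False using ivn by simp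
  qed
  have tv: "\<tau> v = v" unfolding \<tau>_def using ivn vi1 by (simp add: transpose_def)
  have posb: "pos n r b \<subseteq> {1..n}" using pos_sub n0 by blast
  have vnb: "v \<notin> pos n r b"
  proof
    assume "v \<in> pos n r b"
    then have "\<sigma> (\<tau> v) \<in> B" using b by auto
    then show False using tv hB by simp
  qed
  then have vb: "(int v - int b) mod int n \<ge> int r" using mem_pos[OF n0 less_imp_le[OF rn] hv] by simp
  define b' where "b' = d b"
  have b'eq: "b' = int n - (int v - int b) mod int n"
  proof -
    have "(int v - int b) mod int n \<noteq> 0" using vb r0 by simp
    then have "(- (int v - int b)) mod int n = int n - (int v - int b) mod int n"
      by (subst zmod_zminus1_eq_if) simp
    moreover have "int b - int v = - (int v - int b)" by simp
    ultimately show ?thesis unfolding b'_def d_def by metis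
  qed
  have b'r: "1 \<le> b'" "b' \<le> int n - int r"
  proof -
    have "(int v - int b) mod int n < int n" using n0 by simp
    then show "1 \<le> b'" "b' \<le> int n - int r" using b'eq vb by auto
  qed
  have dpos: "d p = b' + (int p - int b) mod int n" "(int p - int b) mod int n < int r"
    if "p \<in> pos n r b" for p
  proof -
    have pn: "p \<in> {1..n}" using that posb by blast
    show e: "(int p - int b) mod int n < int r" using that mem_pos[OF n0 less_imp_le[OF rn] pn] by simp
    have "d p = ((int b - int v) + (int p - int b)) mod int n" unfolding d_def by simp
    also have "\<dots> = (b' + (int p - int b) mod int n) mod int n" unfolding b'_def d_def
      by (metis mod_add_eq)
    also have "\<dots> = b' + (int p - int b) mod int n"
      using b'r e n0 by (intro mod_pos_pos_trivial) auto
    finally show "d p = b' + (int p - int b) mod int n" .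
  qed
  define c where "c = d i"
  have c1: "c \<ge> 1"
  proof -
    have "c \<noteq> 0"
    proof
      assume "c = 0"
      then have "int i mod int n = int v mod int n" unfolding c_def d_def
        using mod_eq_dvd_iff mod_0_imp_dvd by blast
      then show False using eq_by_mod[OF ivn(1) hv] ivn by simp
    qed
    then show ?thesis using d_rng[of i] unfolding c_def by simp
  qed
  have c2: "c \<le> int n - 2"
  proof -
    have "c \<noteq> int n - 1"
    proof
      assume "c = int n - 1"
      then have "((int i - int v) mod int n + 1) mod int n = 0" unfolding c_def d_def by simp
      then have "((int i - int v) + 1) mod int n = 0" by (simp add: mod_add_left_eq)
      then have "int n dvd (int i - (int v - 1))" using mod_0_imp_dvd by (simp add: algebra_simps)
      then have "int i mod int n = (int v - 1) mod int n" using mod_eq_dvd_iff by blast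
      then have "int i mod int n = int (cyc n (v + n - 1)) mod int n" using cmod by simp
      then show False using eq_by_mod[OF ivn(1) cyc_range[OF n0]] ivn by simp
    qed
    then show ?thesis using d_rng[of i] unfolding c_def by simp
  qed
  have di1: "d i1 = c + 1"
  proof -
    have "int i1 mod int n = (int i + 1) mod int n" unfolding i1_def using cyc_mod n0
      by (metis of_nat_Suc Suc_eq_plus1 add.commute)
    then have "d i1 = ((int i - int v) + 1) mod int n" unfolding d_def
      by (metis add.commute add_diff_eq mod_diff_left_eq)
    also have "\<dots> = (c + 1) mod int n" unfolding c_def d_def by (metis mod_add_left_eq)
    also have "\<dots> = c + 1" using c1 c2 by (intro mod_pos_pos_trivial) auto
    finally show ?thesis .
  qed
  define a where "a = (if c + 1 = b' then c else b')"
  have a1: "a \<ge> 1" unfolding a_def using c1 b'r by auto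
  have arng: "a \<le> d (\<tau> p) \<and> d (\<tau> p) \<le> a + int r" if "p \<in> pos n r b" for p
  proof -
    note e = dpos[OF that]
    have ge0: "(int p - int b) mod int n \<ge> 0" using n0 by simp
    consider "p = i" | "p \<noteq> i" "p = i1" | "p \<noteq> i" "p \<noteq> i1" by blast
    then show ?thesis
    proof cases
      case 1
      then have "\<tau> p = i1" unfolding \<tau>_def by simp
      moreover have "d p = c" using 1 c_def by simp
      ultimately show ?thesis using e ge0 di1 unfolding a_def by auto
    next
      case 2
      then have "\<tau> p = i" unfolding \<tau>_def by simp
      moreover have "d p = c + 1" using 2 di1 by simp
      ultimately show ?thesis using e ge0 unfolding a_def c_def by auto
    next
      case 3
      then have "\<tau> p = p" unfolding \<tau>_def by simp
      then show ?thesis using e ge0 unfolding a_def by auto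
    qed
  qed
  define T where "T j = nat (min (a - 1 + int j * int m) (int r - 1))" for j
  have Tint: "int (T j) = min (a - 1 + int j * int m) (int r - 1)" for j
    unfolding T_def using a1 r0 by simp
  have Tr: "T j < r" for j using Tint[of j] r0 by linarith
  define A where "A j = (if j < k - 1 then f (T j) else B)" for j
  have "\<forall>j<k. A j \<in> F" using fF Tr b(3) unfolding A_def by simp
  then have "(\<Inter>j<k. A j) \<noteq> {}" using hk unfolding kwise_intersecting_def by blast
  then obtain y where y: "\<And>j. j < k \<Longrightarrow> y \<in> A j" by blast
  have "y \<in> B" using y[of "k - 1"] k2 unfolding A_def by simp
  then obtain p where p: "p \<in> pos n r b" "y = \<sigma> (\<tau> p)" using b by auto
  define q where "q = \<tau> p"
  have qn: "q \<in> {1..n}" using p(1) posb ivn(1) i1n unfolding q_def \<tau>_def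
    by (auto simp: transpose_def)
  define D where "D = d q"
  have Da: "a \<le> D" "D \<le> a + int r" using arng[OF p(1)] unfolding D_def q_def by auto
  have Dn: "D < int n" using d_rng unfolding D_def by blast
  define j0 where "j0 = nat ((D - a) div int m)"
  have j0int: "int j0 = (D - a) div int m" unfolding j0_def using Da m0 by (simp add: pos_imp_zdiv_nonneg_iff)
  have j0m: "int j0 * int m \<le> D - a" "D - a < int j0 * int m + int m"
  proof -
    have eq: "(D - a) div int m * int m + (D - a) mod int m = D - a" by (rule div_mult_mod_eq)
    have "0 \<le> (D - a) mod int m" "(D - a) mod int m < int m" using m0 by auto
    moreover have "int j0 * int m = (D - a) div int m * int m" using j0int by simp
    ultimately show "int j0 * int m \<le> D - a" "D - a < int j0 * int m + int m" using eq by linarith+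
  qed
  have j0k: "j0 < k - 1"
  proof -
    have "int r < int ((k - 1) * m)" using rkm by linarith
    moreover have "int (j0 * m) = int j0 * int m" by simp
    ultimately have "int (j0 * m) < int ((k - 1) * m)" using j0m(1) Da by linarith
    then have "j0 * m < (k - 1) * m" by linarith
    then show ?thesis using mult_less_cancel2 by blast
  qed
  have "y \<in> f (T j0)" using y[of j0] j0k unfolding A_def by simp
  then have qin: "q \<in> pos n r (x (T j0))" using p(2) inj unfolding f_def q_def by (auto dest: injD)
  have mint: "int m = int n - int r" unfolding m_def using rn by simp
  have "d q - int m \<le> int (T j0) \<and> int (T j0) \<le> d q - 1"
    using Tint[of j0] j0m Da Dn mint unfolding D_def[symmetric] by (auto simp: min_def)
  then show False using notmem[OF qn Tr[of j0]] qin by blast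
qed

end
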